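(* Let $1\le q<p$. Let $X$ be an asymptotically $p$-uniformly smooth Banach space, $Y$ a Banach space with a $1$-unconditional basis satisfying a lower $\ell_q$-estimate with constant $1$, and $f:X\to Y$ a coarse map. Then for every $t>0$ and $\delta\in(0,1)$ there exist $x\in X$, $\tau>t$ and a compact set $K\subset Y$ such that for every weakly null sequence $(x_n)$ in $B_X$ there is $n_0\in\mathbb N$ with $f(x+\tau x_n)\in K+\delta\tau B_Y$ for all $n>n_0$.
   Context: $X$ is asymptotically $p$-uniformly smooth if $\overline\rho_X(t)\le Ct^p$ for $t\in[0,1]$, where $\overline{\rho}_X(t)=\sup_{x\in\partial B_X}\inf_{\dim(X/E)<\infty}\sup_{h\in\partial B_E}\|x+th\|-1$. A $1$-unconditional basis of $Y$ satisfies a lower $\ell_q$-estimate with constant $1$ if $\|y_1+\dots+y_k\|^q\ge\sum_{n=1}^k\|y_n\|^q$ for all disjointly supported $y_1,\dots,y_k\in Y$. $f$ is a coarse map if $\omega_f(t)=\sup\{\|f(x)-f(y)\|:\|x-y\|\le t\}<\infty$ for all $t\ge0$. $K+\delta\tau B_Y=\{k+w:k\in K,\|w\|\le\delta\tau\}$. *)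

theory Defs
  imports "HOL-Analysis.Analysis" "HOL-Library.Extended_Real"
begin

definition fin_codim :: "'a::real_vector set \<Rightarrow> bool" where
  "fin_codim E \<longleftrightarrow> subspace E \<and> (\<exists>F. finite F \<and> span (E \<union> F) = UNIV)"

text \<open>Modulus of asymptotic uniform smoothness (extended reals, so that
  sup/inf of empty sets are handled by the usual conventions).\<close>
definition rho_bar :: "'a::real_normed_vector itself \<Rightarrow> real \<Rightarrow> ereal" where
  "rho_bar _ t = (SUP x\<in>sphere (0::'a) 1. INF E\<in>{E. fin_codim E}.
      SUP h\<in>sphere 0 1 \<inter> E. ereal (norm (x + t *\<^sub>R h) - 1))"

definition asympt_p_unif_smooth :: "'a::real_normed_vector itself \<Rightarrow> real \<Rightarrow> bool" where
  "asympt_p_unif_smooth T p \<longleftrightarrow>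
     (\<exists>C. \<forall>t\<in>{0..1}. rho_bar T t \<le> ereal (C * t powr p))"

definition schauder_basis :: "(nat \<Rightarrow> 'b::real_normed_vector) \<Rightarrow> bool" where
  "schauder_basis e \<longleftrightarrow> (\<forall>y. \<exists>!a. (\<lambda>n. a n *\<^sub>R e n) sums y)"

definition coord :: "(nat \<Rightarrow> 'b::real_normed_vector) \<Rightarrow> 'b \<Rightarrow> nat \<Rightarrow> real" where
  "coord e y = (THE a. (\<lambda>n. a n *\<^sub>R e n) sums y)"

definition bsupp :: "(nat \<Rightarrow> 'b::real_normed_vector) \<Rightarrow> 'b \<Rightarrow> nat set" where
  "bsupp e y = {n. coord e y n \<noteq> 0}"

definition one_unconditional_basis :: "(nat \<Rightarrow> 'b::real_normed_vector) \<Rightarrow> bool" where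
  "one_unconditional_basis e \<longleftrightarrow> schauder_basis e \<and>
     (\<forall>N (a::nat \<Rightarrow> real) (\<epsilon>::nat \<Rightarrow> real). (\<forall>i. \<epsilon> i = 1 \<or> \<epsilon> i = -1) \<longrightarrow>
        norm (\<Sum>i<N. (\<epsilon> i * a i) *\<^sub>R e i) \<le> norm (\<Sum>i<N. a i *\<^sub>R e i))"

definition lower_lq_estimate :: "(nat \<Rightarrow> 'b::real_normed_vector) \<Rightarrow> real \<Rightarrow> bool" where
  "lower_lq_estimate e q \<longleftrightarrow>
     (\<forall>k (y::nat \<Rightarrow> 'b). (\<forall>i<k. \<forall>j<k. i \<noteq> j \<longrightarrow> bsupp e (y i) \<inter> bsupp e (y j) = {}) \<longrightarrow>
        (\<Sum>i<k. norm (y i) powr q) \<le> norm (\<Sum>i<k. y i) powr q)"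

definition omega :: "('a::real_normed_vector \<Rightarrow> 'b::real_normed_vector) \<Rightarrow> real \<Rightarrow> ereal" where
  "omega f t = (SUP (x,y)\<in>{(x,y). norm (x - y) \<le> t}. ereal (norm (f x - f y)))"

definition coarse_map :: "('a::real_normed_vector \<Rightarrow> 'b::real_normed_vector) \<Rightarrow> bool" where
  "coarse_map f \<longleftrightarrow> (\<forall>t\<ge>0. omega f t < \<infinity>)"

definition weakly_null :: "(nat \<Rightarrow> 'a::real_normed_vector) \<Rightarrow> bool" where
  "weakly_null xs \<longleftrightarrow> (\<forall>\<phi>::'a \<Rightarrow> real. bounded_linear \<phi> \<longrightarrow> (\<lambda>n. \<phi> (xs n)) \<longlonglongrightarrow> 0)"

definition ball_nbhd :: "'b::real_normed_vector set \<Rightarrow> real \<Rightarrow> 'b set" where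
  "ball_nbhd K r = {k + w | k w. k \<in> K \<and> norm w \<le> r}"

end

theory Submission
  imports Defs
begin

lemma subspace_closure_gen:
  fixes S :: "'a::real_normed_vector set"
  assumes "subspace S" shows "subspace (closure S)"
  unfolding subspace_def
proof (intro conjI ballI allI)
  show "0 \<in> closure S" using assms closure_subset subspace_0 by blast
next
  fix x y assume "x \<in> closure S" "y \<in> closure S"
  then obtain u v where u: "\<forall>n. u n \<in> S" "u \<longlonglongrightarrow> x" and v: "\<forall>n. v n \<in> S" "v \<longlonglongrightarrow> y"
    unfolding closure_sequential by blast
  have "(\<lambda>n. u n + v n) \<longlonglongrightarrow> x + y" using u v by (intro tendsto_intros)
  moreover have "\<forall>n. u n + v n \<in> S" using u v assms by (simp add: subspace_add)
  ultimately show "x + y \<in> closure S" unfolding closure_sequential by (intro exI[of _ "\<lambda>n. u n + v n"]) simp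
next
  fix c and x assume "x \<in> closure S"
  then obtain u where u: "\<forall>n. u n \<in> S" "u \<longlonglongrightarrow> x"
    unfolding closure_sequential by blast
  have "(\<lambda>n. c *\<^sub>R u n) \<longlonglongrightarrow> c *\<^sub>R x" using u by (intro tendsto_intros)
  moreover have "\<forall>n. c *\<^sub>R u n \<in> S" using u assms by (simp add: subspace_scale)
  ultimately show "c *\<^sub>R x \<in> closure S" unfolding closure_sequential by (intro exI[of _ "\<lambda>n. c *\<^sub>R u n"]) simp
qed

lemma line_bound:
  fixes M :: "'a::real_normed_vector set"
  assumes "subspace M" "m \<in> M"
  shows "\<bar>t\<bar> * infdist b M \<le> norm (m + t *\<^sub>R b)"
proof (cases "t = 0")
  case True then show ?thesis by simp
next
  case False
  have mm: "(- (1/t)) *\<^sub>R m \<in> M" using assms subspace_scale by blast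
  have "infdist b M \<le> dist b ((- (1/t)) *\<^sub>R m)" by (rule infdist_le[OF mm])
  also have "\<dots> = norm (b + (1/t) *\<^sub>R m)" by (simp add: dist_norm)
  finally have 1: "infdist b M \<le> norm (b + (1/t) *\<^sub>R m)" .
  have "m + t *\<^sub>R b = t *\<^sub>R (b + (1/t) *\<^sub>R m)" using False by (simp add: algebra_simps)
  hence "norm (m + t *\<^sub>R b) = \<bar>t\<bar> * norm (b + (1/t) *\<^sub>R m)" by simp
  with 1 show ?thesis by (simp add: mult_left_mono)
qed

lemma line_unique:
  fixes M :: "'a::real_vector set"
  assumes "subspace M" "b \<notin> M" "y - s *\<^sub>R b \<in> M" "y - t *\<^sub>R b \<in> M"
  shows "s = t"
proof (rule ccontr)
  assume "s \<noteq> t"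
  have "(y - t *\<^sub>R b) - (y - s *\<^sub>R b) \<in> M" using assms subspace_diff by blast
  hence "(s - t) *\<^sub>R b \<in> M" by (simp add: algebra_simps)
  hence "(1/(s-t)) *\<^sub>R ((s - t) *\<^sub>R b) \<in> M" using assms subspace_scale by blast
  with \<open>s \<noteq> t\<close> have "b \<in> M" by simp
  with assms show False by simp
qed

lemma line_ext_subspace:
  fixes M :: "'a::real_vector set"
  assumes "subspace M"
  shows "subspace {m + t *\<^sub>R b | m t. m \<in> M}"
  unfolding subspace_def
proof (intro conjI ballI allI)
  show "0 \<in> {m + t *\<^sub>R b | m t. m \<in> M}"
    by (rule CollectI, rule exI[of _ 0], rule exI[of _ 0]) (simp add: assms subspace_0)
next
  fix x y assume "x \<in> {m + t *\<^sub>R b | m t. m \<in> M}" "y \<in> {m + t *\<^sub>R b | m t. m \<in> M}"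
  then obtain m1 t1 m2 t2 where "x = m1 + t1 *\<^sub>R b" "m1 \<in> M" "y = m2 + t2 *\<^sub>R b" "m2 \<in> M" by blast
  then show "x + y \<in> {m + t *\<^sub>R b | m t. m \<in> M}"
    by (intro CollectI exI[of _ "m1+m2"] exI[of _ "t1+t2"]) (auto simp: algebra_simps assms subspace_add)
next
  fix c x assume "x \<in> {m + t *\<^sub>R b | m t. m \<in> M}"
  then obtain m1 t1 where "x = m1 + t1 *\<^sub>R b" "m1 \<in> M" by blast
  then show "c *\<^sub>R x \<in> {m + t *\<^sub>R b | m t. m \<in> M}"
    by (intro CollectI exI[of _ "c *\<^sub>R m1"] exI[of _ "c*t1"]) (auto simp: algebra_simps assms subspace_scale)
qed

lemma line_ext_closed:
  fixes M :: "'a::real_normed_vector set"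
  assumes "subspace M" "closed M" "b \<notin> M"
  shows "closed {m + t *\<^sub>R b | m t. m \<in> M}"
proof -
  let ?M' = "{m + t *\<^sub>R b | m t. m \<in> M}"
  have Mne: "M \<noteq> {}" using assms subspace_0 by blast
  have d: "infdist b M > 0" using infdist_pos_not_in_closed[OF assms(2) Mne assms(3)] .
  show ?thesis unfolding closed_sequential_limits
  proof (intro allI impI, elim conjE)
    fix x l assume xs: "\<forall>n. x n \<in> ?M'" and xl: "x \<longlonglongrightarrow> l"
    have "\<forall>n. \<exists>pr. x n = fst pr + snd pr *\<^sub>R b \<and> fst pr \<in> M" using xs by force
    then have "\<exists>pp. \<forall>n. x n = fst (pp n) + snd (pp n) *\<^sub>R b \<and> fst (pp n) \<in> M" by (rule choice)
    then obtain pp where pp: "\<forall>n. x n = fst (pp n) + snd (pp n) *\<^sub>R b \<and> fst (pp n) \<in> M" by blast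
    define m where "m n = fst (pp n)" for n
    define t where "t n = snd (pp n)" for n
    have mt: "\<And>n. x n = m n + t n *\<^sub>R b" "\<And>n. m n \<in> M" using pp by (auto simp: m_def t_def)
    have bnd: "\<bar>t i - t j\<bar> * infdist b M \<le> norm (x i - x j)" for i j
    proof -
      have "m i - m j \<in> M" using mt assms subspace_diff by blast
      hence "\<bar>t i - t j\<bar> * infdist b M \<le> norm ((m i - m j) + (t i - t j) *\<^sub>R b)"
        by (rule line_bound[OF assms(1)])
      also have "(m i - m j) + (t i - t j) *\<^sub>R b = x i - x j" by (simp add: mt algebra_simps)
      finally show ?thesis .
    qed
    have "Cauchy x" using xl by (rule LIMSEQ_imp_Cauchy)
    have "Cauchy t"
      unfolding Cauchy_def
    proof (intro allI impI)
      fix e :: real assume e: "e > 0"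
      have "e * infdist b M > 0" using e d by simp
      with \<open>Cauchy x\<close> obtain N where N: "\<forall>i\<ge>N. \<forall>j\<ge>N. dist (x i) (x j) < e * infdist b M"
        unfolding Cauchy_def by blast
      show "\<exists>N. \<forall>i\<ge>N. \<forall>j\<ge>N. dist (t i) (t j) < e"
      proof (intro exI allI impI)
        fix i j assume "i \<ge> N" "j \<ge> N"
        have "dist (x i) (x j) < e * infdist b M" using N \<open>i \<ge> N\<close> \<open>j \<ge> N\<close> by blast
        then have "\<bar>t i - t j\<bar> * infdist b M < e * infdist b M"
          using bnd[of i j] by (simp add: dist_norm)
        then show "dist (t i) (t j) < e" using d by (simp add: dist_real_def)
      qed
    qed
    then obtain \<tau> where t\<tau>: "t \<longlonglongrightarrow> \<tau>" using Cauchy_convergent_iff convergent_def by blast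
    have "(\<lambda>n. x n - t n *\<^sub>R b) \<longlonglongrightarrow> l - \<tau> *\<^sub>R b" using xl t\<tau> by (intro tendsto_intros)
    moreover have "\<And>n. x n - t n *\<^sub>R b \<in> M" using mt by simp
    ultimately have "l - \<tau> *\<^sub>R b \<in> M" by (rule closed_sequentially[OF assms(2), rotated])
    then show "l \<in> ?M'" by (intro CollectI exI[of _ "l - \<tau> *\<^sub>R b"] exI[of _ \<tau>]) simp
  qed
qed


lemma fin_codim_coeffs:
  fixes B :: "'a::real_normed_vector set"
  assumes "finite B"
  shows "closed M \<Longrightarrow> subspace M \<Longrightarrow> span (M \<union> B) = UNIV \<Longrightarrow>
    \<exists>c. (\<forall>b\<in>B. bounded_linear (c b)) \<and> (\<forall>x. x - (\<Sum>b\<in>B. c b x *\<^sub>R b) \<in> M)"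
  using assms
proof (induction B arbitrary: M rule: finite_induct)
  case empty
  then have "span M = UNIV" by simp
  then have "M = UNIV" using empty span_eq_iff by blast
  then show ?case by (intro exI[of _ "\<lambda>_ _. 0"]) simp
next
  case (insert b B)
  show ?case
  proof (cases "b \<in> M")
    case True
    have "span (M \<union> insert b B) = span (insert b (M \<union> B))" by simp
    also have "\<dots> = span (M \<union> B)" using True by (intro span_redundant) (simp add: span_base)
    finally have "span (M \<union> B) = UNIV" using insert by simp
    then obtain c' where c': "\<forall>b\<in>B. bounded_linear (c' b)" "\<forall>x. x - (\<Sum>b\<in>B. c' b x *\<^sub>R b) \<in> M"
      using insert by blast
    define c where "c = c'(b := (\<lambda>x. 0))"
    have "\<forall>b'\<in>insert b B. bounded_linear (c b')" using c' by (auto simp: c_def bounded_linear_zero)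
    moreover have "\<forall>x. x - (\<Sum>b'\<in>insert b B. c b' x *\<^sub>R b') \<in> M"
    proof
      fix x
      have "(\<Sum>b'\<in>insert b B. c b' x *\<^sub>R b') = (\<Sum>b'\<in>B. c' b' x *\<^sub>R b')"
        using insert.hyps by (simp add: c_def) (rule sum.cong, auto)
      then show "x - (\<Sum>b'\<in>insert b B. c b' x *\<^sub>R b') \<in> M" using c' by simp
    qed
    ultimately show ?thesis by blast
  next
    case False
    define M' where "M' = {m + t *\<^sub>R b | m t. m \<in> M}"
    have sM': "subspace M'" unfolding M'_def by (rule line_ext_subspace[OF insert.prems(2)])
    have cM': "closed M'" unfolding M'_def by (rule line_ext_closed[OF insert.prems(2,1) False])
    have MM': "M \<subseteq> M'"
    proof
      fix x assume "x \<in> M"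
      then show "x \<in> M'" unfolding M'_def by (intro CollectI exI[of _ x] exI[of _ "0::real"]) simp
    qed
    have bM': "b \<in> M'" unfolding M'_def
      by (intro CollectI exI[of _ 0] exI[of _ "1::real"]) (simp add: insert.prems(2) subspace_0)
    have "UNIV = span (M \<union> insert b B)" using insert by simp
    also have "\<dots> \<subseteq> span (M' \<union> B)" using MM' bM' by (intro span_mono) auto
    finally have "span (M' \<union> B) = UNIV" by auto
    then obtain c' where c': "\<forall>b\<in>B. bounded_linear (c' b)" "\<forall>x. x - (\<Sum>b\<in>B. c' b x *\<^sub>R b) \<in> M'"
      using insert.IH sM' cM' by blast
    define g where "g x = x - (\<Sum>b\<in>B. c' b x *\<^sub>R b)" for x
    have gM': "g x \<in> M'" for x using c' by (simp add: g_def)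
    have bl1: "bounded_linear (\<lambda>x. c' b' x *\<^sub>R b')" if "b' \<in> B" for b'
      using bounded_linear_compose[OF bounded_linear_scaleR_left, of "c' b'" b'] c' that by blast
    have blg: "bounded_linear g" unfolding g_def
      by (rule bounded_linear_sub[OF bounded_linear_ident bounded_linear_sum]) (rule bl1)
    define \<psi> where "\<psi> y = (THE t. y - t *\<^sub>R b \<in> M)" for y
    have \<psi>: "y - \<psi> y *\<^sub>R b \<in> M" if yM: "y \<in> M'" for y
    proof -
      obtain m t where "y = m + t *\<^sub>R b" "m \<in> M" using yM unfolding M'_def by blast
      then have ex: "y - t *\<^sub>R b \<in> M" by simp
      have "\<exists>!t. y - t *\<^sub>R b \<in> M"
        using ex line_unique[OF insert.prems(2) False] by blast
      then show ?thesis unfolding \<psi>_def by (rule theI')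
    qed
    have \<psi>eq: "\<psi> y = t" if "y - t *\<^sub>R b \<in> M" "y \<in> M'" for y t
      using line_unique[OF insert.prems(2) False \<psi>[OF that(2)] that(1)] .
    have dpos: "infdist b M > 0"
      using infdist_pos_not_in_closed[OF insert.prems(1) _ False] insert.prems(2) subspace_0 by blast
    have \<psi>bnd: "\<bar>\<psi> y\<bar> * infdist b M \<le> norm y" if "y \<in> M'" for y
      using line_bound[OF insert.prems(2) \<psi>[OF that], of "\<psi> y" b] by simp
    obtain K where K: "\<And>x. norm (g x) \<le> norm x * K" using bounded_linear.bounded[OF blg] by blast
    have bl\<psi>: "bounded_linear (\<lambda>x. \<psi> (g x))"
    proof (rule bounded_linear_intro)
      fix x y
      have "g (x + y) - (\<psi> (g x) + \<psi> (g y)) *\<^sub>R b = (g x - \<psi> (g x) *\<^sub>R b) + (g y - \<psi> (g y) *\<^sub>R b)"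
        using linear_add[OF bounded_linear.linear[OF blg]] by (simp add: algebra_simps)
      also have "\<dots> \<in> M" using \<psi>[OF gM'] insert.prems(2) subspace_add by blast
      finally show "\<psi> (g (x + y)) = \<psi> (g x) + \<psi> (g y)" by (rule \<psi>eq[OF _ gM'])
    next
      fix r x
      have "g (r *\<^sub>R x) - (r * \<psi> (g x)) *\<^sub>R b = r *\<^sub>R (g x - \<psi> (g x) *\<^sub>R b)"
        using linear_scale[OF bounded_linear.linear[OF blg]] by (simp add: algebra_simps)
      also have "\<dots> \<in> M" using \<psi>[OF gM'] insert.prems(2) subspace_scale by blast
      finally show "\<psi> (g (r *\<^sub>R x)) = r *\<^sub>R \<psi> (g x)" by (simp add: \<psi>eq[OF _ gM'])
    next
      fix x
      have "\<bar>\<psi> (g x)\<bar> * infdist b M \<le> norm x * K" using \<psi>bnd[OF gM'] K order_trans by blast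
      then have "\<bar>\<psi> (g x)\<bar> \<le> norm x * (K / infdist b M)" using dpos by (simp add: field_simps)
      then show "norm (\<psi> (g x)) \<le> norm x * (K / infdist b M)" by simp
    qed
    define c where "c = c'(b := (\<lambda>x. \<psi> (g x)))"
    have "\<forall>b'\<in>insert b B. bounded_linear (c b')" using c' bl\<psi> by (auto simp: c_def)
    moreover have "\<forall>x. x - (\<Sum>b'\<in>insert b B. c b' x *\<^sub>R b') \<in> M"
    proof
      fix x
      have "(\<Sum>b'\<in>insert b B. c b' x *\<^sub>R b') = \<psi> (g x) *\<^sub>R b + (\<Sum>b'\<in>B. c' b' x *\<^sub>R b')"
        using insert.hyps by (simp add: c_def) (rule sum.cong, auto)
      then have "x - (\<Sum>b'\<in>insert b B. c b' x *\<^sub>R b') = g x - \<psi> (g x) *\<^sub>R b"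
        by (simp add: g_def algebra_simps)
      then show "x - (\<Sum>b'\<in>insert b B. c b' x *\<^sub>R b') \<in> M" using \<psi>[OF gM'] by simp
    qed
    ultimately show ?thesis by blast
  qed
qed

lemma weakly_null_near_subspace:
  fixes xs :: "nat \<Rightarrow> 'a::real_normed_vector"
  assumes wn: "weakly_null xs" and E: "subspace E" "finite F" "span (E \<union> F) = UNIV" and \<eta>: "\<eta> > 0"
  shows "eventually (\<lambda>n. \<exists>e\<in>E. norm (xs n - e) < \<eta>) sequentially"
proof -
  define M where "M = closure E"
  have cM: "closed M" "subspace M" using subspace_closure_gen[OF E(1)] by (auto simp: M_def)
  have "UNIV = span (E \<union> F)" using E by simp
  also have "\<dots> \<subseteq> span (M \<union> F)" unfolding M_def by (intro span_mono) (use closure_subset in auto)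
  finally have "span (M \<union> F) = UNIV" by auto
  then obtain c where c: "\<forall>b\<in>F. bounded_linear (c b)" "\<forall>x. x - (\<Sum>b\<in>F. c b x *\<^sub>R b) \<in> M"
    using fin_codim_coeffs[OF E(2) cM] by blast
  have "(\<lambda>n. \<Sum>b\<in>F. c b (xs n) *\<^sub>R b) \<longlonglongrightarrow> 0"
  proof (rule tendsto_null_sum)
    fix b assume "b \<in> F"
    then have "(\<lambda>n. c b (xs n)) \<longlonglongrightarrow> 0" using wn c unfolding weakly_null_def by blast
    then have "(\<lambda>n. c b (xs n) *\<^sub>R b) \<longlonglongrightarrow> 0 *\<^sub>R b" by (intro tendsto_intros)
    then show "(\<lambda>n. c b (xs n) *\<^sub>R b) \<longlonglongrightarrow> 0" by simp
  qed
  then have "(\<lambda>n. norm (\<Sum>b\<in>F. c b (xs n) *\<^sub>R b)) \<longlonglongrightarrow> 0" by (rule tendsto_norm_zero)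
  then have "eventually (\<lambda>n. norm (\<Sum>b\<in>F. c b (xs n) *\<^sub>R b) < \<eta>/2) sequentially"
    by (rule order_tendstoD(2)) (use \<eta> in simp)
  then show ?thesis
  proof (rule eventually_mono)
    fix n assume n: "norm (\<Sum>b\<in>F. c b (xs n) *\<^sub>R b) < \<eta>/2"
    define r where "r = xs n - (\<Sum>b\<in>F. c b (xs n) *\<^sub>R b)"
    have "r \<in> closure E" using c by (simp add: r_def M_def)
    then obtain e where e: "e \<in> E" "dist e r < \<eta>/2" using closure_approachable \<eta> by (metis half_gt_zero)
    have "norm (xs n - e) \<le> norm (xs n - r) + norm (r - e)" using norm_triangle_ineq[of "xs n - r" "r - e"] by simp
    also have "\<dots> < \<eta>" using n e by (simp add: r_def dist_norm norm_minus_commute)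
    finally show "\<exists>e\<in>E. norm (xs n - e) < \<eta>" using e by blast
  qed
qed


lemma aus_step:
  fixes xs :: "nat \<Rightarrow> 'a::real_normed_vector" and z :: 'a
  assumes AUS: "\<forall>s\<in>{0..1}. rho_bar TYPE('a) s \<le> ereal (C * s powr p)" and C: "C \<ge> 0"
    and D: "norm z = D" "D > 0" and \<theta>: "0 \<le> \<theta>" "\<theta> \<le> 1" and \<epsilon>: "\<epsilon> > 0"
    and wn: "weakly_null xs" and bd: "\<forall>n. norm (xs n) \<le> 1"
  shows "eventually (\<lambda>n. norm (z + (\<theta>*D) *\<^sub>R xs n) \<le> D * (1 + C * \<theta> powr p + \<epsilon>)) sequentially"
proof -
  define x0 where "x0 = (1/D) *\<^sub>R z"
  have x0: "x0 \<in> sphere 0 1" using D by (simp add: x0_def)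
  have "(INF E\<in>{E. fin_codim E}. SUP h\<in>sphere 0 1 \<inter> E. ereal (norm (x0 + \<theta> *\<^sub>R h) - 1))
        \<le> rho_bar TYPE('a) \<theta>"
    unfolding rho_bar_def by (rule SUP_upper[OF x0])
  also have "\<dots> \<le> ereal (C * \<theta> powr p)" using AUS \<theta> by simp
  also have "\<dots> < ereal (C * \<theta> powr p + \<epsilon>/2)" using \<epsilon> by simp
  finally obtain E where E: "fin_codim E"
    and Es: "(SUP h\<in>sphere 0 1 \<inter> E. ereal (norm (x0 + \<theta> *\<^sub>R h) - 1)) < ereal (C * \<theta> powr p + \<epsilon>/2)"
    by (auto simp: INF_less_iff)
  define A where "A = 1 + C * \<theta> powr p + \<epsilon>/2"
  have A1: "1 \<le> A" using C \<epsilon> by (simp add: A_def)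
  have hE: "norm (x0 + \<theta> *\<^sub>R h) \<le> A" if "h \<in> sphere 0 1 \<inter> E" for h
  proof -
    have "ereal (norm (x0 + \<theta> *\<^sub>R h) - 1) < ereal (C * \<theta> powr p + \<epsilon>/2)"
      using SUP_upper[OF that, of "\<lambda>h. ereal (norm (x0 + \<theta> *\<^sub>R h) - 1)"] Es by (rule le_less_trans)
    then show ?thesis by (simp add: A_def)
  qed
  have sE: "subspace E" using E by (simp add: fin_codim_def)
  have hE2: "norm (x0 + \<theta> *\<^sub>R h) \<le> A" if h: "h \<in> E" "norm h \<le> 1" for h
  proof (cases "h = 0")
    case True then show ?thesis using x0 A1 by simp
  next
    case False
    define l where "l = norm h"
    define h' where "h' = (1/l) *\<^sub>R h"
    have l: "0 < l" "l \<le> 1" using False h by (auto simp: l_def)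
    have h'E: "h' \<in> sphere 0 1 \<inter> E" "-h' \<in> sphere 0 1 \<inter> E"
      using h l sE by (auto simp: h'_def l_def subspace_scale subspace_neg)
    have g: "a *\<^sub>R (x0 + \<theta> *\<^sub>R h') + b *\<^sub>R (x0 + \<theta> *\<^sub>R (-h')) = (a+b) *\<^sub>R x0 + ((a-b)*\<theta>) *\<^sub>R h'" for a b
      by (simp add: algebra_simps)
    have hh: "h = l *\<^sub>R h'" using l by (simp add: h'_def)
    have c1: "(1+l)/2 + (1-l)/2 = (1::real)" and c2: "((1+l)/2 - (1-l)/2) * \<theta> = \<theta> * l"
      by (simp_all add: field_simps)
    have eq: "x0 + \<theta> *\<^sub>R h = ((1+l)/2) *\<^sub>R (x0 + \<theta> *\<^sub>R h') + ((1-l)/2) *\<^sub>R (x0 + \<theta> *\<^sub>R (-h'))"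
      unfolding g c1 c2 hh by simp
    have "norm (x0 + \<theta> *\<^sub>R h) \<le> norm (((1+l)/2) *\<^sub>R (x0 + \<theta> *\<^sub>R h')) + norm (((1-l)/2) *\<^sub>R (x0 + \<theta> *\<^sub>R (-h')))"
      unfolding eq by (rule norm_triangle_ineq)
    also have "\<dots> = ((1+l)/2) * norm (x0 + \<theta> *\<^sub>R h') + ((1-l)/2) * norm (x0 + \<theta> *\<^sub>R (-h'))"
      using l by simp
    also have "\<dots> \<le> ((1+l)/2) * A + ((1-l)/2) * A"
      using l hE[OF h'E(1)] hE[OF h'E(2)] by (intro add_mono mult_left_mono) auto
    also have "\<dots> = A" by (simp add: field_simps)
    finally show ?thesis .
  qed
  obtain F where F: "finite F" "span (E \<union> F) = UNIV" using E by (auto simp: fin_codim_def)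
  have "eventually (\<lambda>n. \<exists>e\<in>E. norm (xs n - e) < \<epsilon>/4) sequentially"
    by (rule weakly_null_near_subspace[OF wn sE F]) (use \<epsilon> in simp)
  then show ?thesis
  proof (rule eventually_mono)
    fix n assume "\<exists>e\<in>E. norm (xs n - e) < \<epsilon>/4"
    then obtain e where e: "e \<in> E" "norm (xs n - e) < \<epsilon>/4" by blast
    define e' where "e' = (1 / max 1 (norm e)) *\<^sub>R e"
    have e'E: "e' \<in> E" using e sE by (simp add: e'_def subspace_scale)
    have ne: "norm e < 1 + \<epsilon>/4"
    proof -
      have "norm e \<le> norm (xs n) + norm (e - xs n)" using norm_triangle_ineq[of "xs n" "e - xs n"] by simp
      moreover have "norm (e - xs n) < \<epsilon>/4" using e by (simp add: norm_minus_commute)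
      ultimately show ?thesis using bd[rule_format, of n] by linarith
    qed
    have e'n: "norm e' \<le> 1 \<and> norm (e - e') \<le> \<epsilon>/4"
    proof (cases "norm e \<le> 1")
      case True then show ?thesis using \<epsilon> by (simp add: e'_def)
    next
      case False
      then have "e - e' = (1 - 1/norm e) *\<^sub>R e" by (simp add: e'_def algebra_simps)
      moreover have "\<bar>1 - 1/norm e\<bar> = 1 - 1/norm e"
      proof -
        have "1/norm e \<le> 1" using False by (simp add: divide_le_eq)
        then show ?thesis by linarith
      qed
      ultimately have "norm (e - e') = (1 - 1/norm e) * norm e" by simp
      also have "\<dots> = norm e - 1" using False by (simp add: field_simps) (metis norm_zero zero_le_one)
      finally show ?thesis using False ne by (simp add: e'_def)
    qed
    have d2: "norm (xs n - e') < \<epsilon>/2"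
      using e e'n norm_triangle_ineq[of "xs n - e" "e - e'"] by simp
    have "norm (x0 + \<theta> *\<^sub>R xs n) \<le> norm (x0 + \<theta> *\<^sub>R e') + norm (\<theta> *\<^sub>R (xs n - e'))"
      using norm_triangle_ineq[of "x0 + \<theta> *\<^sub>R e'" "\<theta> *\<^sub>R (xs n - e')"] by (simp add: algebra_simps)
    also have "\<dots> \<le> A + \<epsilon>/2"
    proof -
      have "norm (\<theta> *\<^sub>R (xs n - e')) \<le> \<epsilon>/2"
        using \<theta> d2 mult_mono[of \<theta> 1 "norm (xs n - e')" "\<epsilon>/2"] by simp
      then show ?thesis using hE2[OF e'E] e'n by simp
    qed
    finally have 1: "norm (x0 + \<theta> *\<^sub>R xs n) \<le> 1 + C * \<theta> powr p + \<epsilon>" by (simp add: A_def)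
    have "z + (\<theta>*D) *\<^sub>R xs n = D *\<^sub>R (x0 + \<theta> *\<^sub>R xs n)" using D by (simp add: x0_def algebra_simps)
    then have "norm (z + (\<theta>*D) *\<^sub>R xs n) = D * norm (x0 + \<theta> *\<^sub>R xs n)" using D by simp
    also have "\<dots> \<le> D * (1 + C * \<theta> powr p + \<epsilon>)" using 1 D by (simp add: mult_left_mono)
    finally show "norm (z + (\<theta>*D) *\<^sub>R xs n) \<le> D * (1 + C * \<theta> powr p + \<epsilon>)" .
  qed
qed


definition PN :: "(nat \<Rightarrow> 'b::real_normed_vector) \<Rightarrow> nat \<Rightarrow> 'b \<Rightarrow> 'b" where
  "PN e N y = (\<Sum>i<N. coord e y i *\<^sub>R e i)"

context
  fixes e :: "nat \<Rightarrow> 'b::real_normed_vector"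
  assumes SB: "schauder_basis e"
begin

lemma coord_sums: "(\<lambda>n. coord e y n *\<^sub>R e n) sums y"
proof -
  have "\<exists>!a. (\<lambda>n. a n *\<^sub>R e n) sums y" using SB by (simp add: schauder_basis_def)
  then show ?thesis unfolding coord_def by (rule theI'[where P = "\<lambda>a. (\<lambda>n. a n *\<^sub>R e n) sums y"])
qed

lemma coord_eq: "(\<lambda>n. a n *\<^sub>R e n) sums y \<Longrightarrow> coord e y = a"
proof -
  assume a: "(\<lambda>n. a n *\<^sub>R e n) sums y"
  have ex: "\<exists>!a. (\<lambda>n. a n *\<^sub>R e n) sums y" using SB by (simp add: schauder_basis_def)
  show ?thesis unfolding coord_def by (rule the1_equality[where P="\<lambda>a. (\<lambda>n. a n *\<^sub>R e n) sums y", OF ex a])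
qed

lemma coord_add: "coord e (x + y) = (\<lambda>n. coord e x n + coord e y n)"
  by (rule coord_eq) (use sums_add[OF coord_sums[of x] coord_sums[of y]] in \<open>simp add: scaleR_add_left\<close>)

lemma coord_diff: "coord e (x - y) = (\<lambda>n. coord e x n - coord e y n)"
  by (rule coord_eq) (use sums_diff[OF coord_sums[of x] coord_sums[of y]] in \<open>simp add: scaleR_diff_left\<close>)

lemma coord_scale: "coord e (r *\<^sub>R x) = (\<lambda>n. r * coord e x n)"
  by (rule coord_eq) (use sums_scaleR_right[OF coord_sums[of x], of r] in simp)

lemma PN_scale: "PN e N (r *\<^sub>R y) = r *\<^sub>R PN e N y"
  by (simp add: PN_def coord_scale scaleR_sum_right)

lemma coord_PN: "coord e (PN e N y) = (\<lambda>i. if i < N then coord e y i else 0)"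
proof (rule coord_eq)
  have "(\<lambda>n. (if n < N then coord e y n else 0) *\<^sub>R e n) sums (\<Sum>n\<in>{..<N}. (if n < N then coord e y n else 0) *\<^sub>R e n)"
    by (rule sums_finite) auto
  also have "(\<Sum>n\<in>{..<N}. (if n < N then coord e y n else 0) *\<^sub>R e n) = PN e N y"
    unfolding PN_def by (rule sum.cong) auto
  finally show "(\<lambda>n. (if n < N then coord e y n else 0) *\<^sub>R e n) sums PN e N y" .
qed

lemma coord_tail: "coord e (y - PN e N y) = (\<lambda>i. if i < N then 0 else coord e y i)"
  by (auto simp: coord_diff coord_PN fun_eq_iff)

lemma PN_add: "PN e N (x + y) = PN e N x + PN e N y"
  by (simp add: PN_def coord_add scaleR_add_left sum.distrib)

lemma PN_diff: "PN e N (x - y) = PN e N x - PN e N y"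
  by (simp add: PN_def coord_diff scaleR_diff_left sum_subtractf)


lemma e_nonzero: "e i \<noteq> 0"
proof
  assume ei: "e i = 0"
  have "(\<lambda>n. (0::real) *\<^sub>R e n) sums 0" by simp
  then have c0: "coord e 0 = (\<lambda>n. 0)" by (rule coord_eq)
  have eq: "(\<lambda>n. (if n = i then (1::real) else 0) *\<^sub>R e n) = (\<lambda>n. 0)" using ei by auto
  have "(\<lambda>n. (if n = i then (1::real) else 0) *\<^sub>R e n) sums 0" by (subst eq) simp
  then have "coord e 0 = (\<lambda>n. if n = i then 1 else 0)" by (rule coord_eq)
  then have "coord e 0 i = 1" by simp
  with c0 show False by simp
qed

lemma tail_small: "\<epsilon> > 0 \<Longrightarrow> \<exists>N. norm (y - PN e N y) < \<epsilon>"
proof -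
  assume \<epsilon>: "\<epsilon> > 0"
  have lim: "(\<lambda>N. PN e N y) \<longlonglongrightarrow> y" using coord_sums[of y] by (simp add: sums_def PN_def)
  obtain N where "\<forall>n\<ge>N. norm (PN e n y - y) < \<epsilon>" using LIMSEQ_iff[THEN iffD1, OF lim] \<epsilon> by blast
  then show ?thesis by (metis norm_minus_commute order_refl)
qed

context
  fixes q :: real
  assumes LQ: "lower_lq_estimate e q" and q: "q \<ge> 1"
begin

lemma decomp: "norm (PN e N w) powr q + norm (w - PN e N w) powr q \<le> norm w powr q"
proof -
  define y where "y i = (if i = 0 then PN e N w else w - PN e N w)" for i :: nat
  have disj: "\<forall>i<2. \<forall>j<2. i \<noteq> j \<longrightarrow> bsupp e (y i) \<inter> bsupp e (y j) = {}"
  proof (intro allI impI)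
    fix i j :: nat assume "i < 2" "j < 2" "i \<noteq> j"
    then have "(i = 0 \<and> j = 1) \<or> (i = 1 \<and> j = 0)" by auto
    moreover have "bsupp e (PN e N w) \<inter> bsupp e (w - PN e N w) = {}"
      by (auto simp: bsupp_def coord_PN coord_tail)
    ultimately show "bsupp e (y i) \<inter> bsupp e (y j) = {}" by (auto simp: y_def)
  qed
  have "(\<Sum>i<2. norm (y i) powr q) \<le> norm (\<Sum>i<2. y i) powr q"
    using LQ disj unfolding lower_lq_estimate_def by blast
  then show ?thesis by (simp add: numeral_2_eq_2 y_def)
qed

lemma PN_le: "norm (PN e N w) \<le> norm w"
proof (rule ccontr)
  assume "\<not> ?thesis"
  then have "norm w powr q < norm (PN e N w) powr q" using q by (intro powr_less_mono2) auto
  moreover have "norm (PN e N w) powr q \<le> norm w powr q"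
    using decomp[of N w] powr_ge_zero[of "norm (w - PN e N w)" q] by linarith
  ultimately show False by simp
qed

lemma coord_bound: "\<bar>coord e w i\<bar> * norm (e i) \<le> 2 * norm w"
proof -
  have "PN e (Suc i) w - PN e i w = coord e w i *\<^sub>R e i" by (simp add: PN_def)
  then have "\<bar>coord e w i\<bar> * norm (e i) = norm (PN e (Suc i) w - PN e i w)" by simp
  also have "\<dots> \<le> norm (PN e (Suc i) w) + norm (PN e i w)" by (rule norm_triangle_ineq4)
  also have "\<dots> \<le> 2 * norm w" using PN_le[of "Suc i" w] PN_le[of i w] by simp
  finally show ?thesis .
qed

end
end

lemma compact_SN:
  fixes e :: "nat \<Rightarrow> 'b::real_normed_vector"
  shows "compact {\<Sum>i<N. a i *\<^sub>R e i | a. \<forall>i<N. \<bar>a i\<bar> \<le> r i}"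
proof (induction N)
  case 0
  have "{\<Sum>i<0. a i *\<^sub>R e i | a. \<forall>i<0. \<bar>a i\<bar> \<le> r i} = {0}" by auto
  then show ?case by simp
next
  case (Suc N)
  let ?S = "{\<Sum>i<N. a i *\<^sub>R e i | a. \<forall>i<N. \<bar>a i\<bar> \<le> r i}"
  let ?T = "(\<lambda>t. t *\<^sub>R e N) ` {- r N .. r N}"
  have cT: "compact ?T"
    by (rule compact_continuous_image) (auto intro!: continuous_intros)
  have eq: "{\<Sum>i<Suc N. a i *\<^sub>R e i | a. \<forall>i<Suc N. \<bar>a i\<bar> \<le> r i} = {x + y | x y. x \<in> ?S \<and> y \<in> ?T}"
  proof (intro set_eqI iffI)
    fix v assume "v \<in> {\<Sum>i<Suc N. a i *\<^sub>R e i | a. \<forall>i<Suc N. \<bar>a i\<bar> \<le> r i}"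
    then obtain a where a: "v = (\<Sum>i<Suc N. a i *\<^sub>R e i)" "\<forall>i<Suc N. \<bar>a i\<bar> \<le> r i" by blast
    have m1: "(\<Sum>i<N. a i *\<^sub>R e i) \<in> ?S" using a(2) by (intro CollectI exI[of _ a]) simp
    have "\<bar>a N\<bar> \<le> r N" using a(2) by simp
    then have "a N \<in> {- r N .. r N}" by (simp add: abs_le_iff)
    then have m2: "a N *\<^sub>R e N \<in> ?T" by (rule imageI)
    have "v = (\<Sum>i<N. a i *\<^sub>R e i) + a N *\<^sub>R e N" using a(1) by simp
    then show "v \<in> {x + y | x y. x \<in> ?S \<and> y \<in> ?T}" using m1 m2 by blast
  next
    fix v assume "v \<in> {x + y | x y. x \<in> ?S \<and> y \<in> ?T}"
    then obtain a t where a: "v = (\<Sum>i<N. a i *\<^sub>R e i) + t *\<^sub>R e N" "\<forall>i<N. \<bar>a i\<bar> \<le> r i" "t \<in> {- r N .. r N}"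
      by blast
    define a' where "a' = a(N := t)"
    have "(\<Sum>i<N. a' i *\<^sub>R e i) = (\<Sum>i<N. a i *\<^sub>R e i)" by (rule sum.cong) (auto simp: a'_def)
    then have "v = (\<Sum>i<Suc N. a' i *\<^sub>R e i)" using a by (simp add: a'_def)
    moreover have "\<forall>i<Suc N. \<bar>a' i\<bar> \<le> r i" using a by (auto simp: a'_def less_Suc_eq abs_le_iff)
    ultimately show "v \<in> {\<Sum>i<Suc N. a i *\<^sub>R e i | a. \<forall>i<Suc N. \<bar>a i\<bar> \<le> r i}" by blast
  qed
  show ?case unfolding eq by (rule compact_sums[OF Suc cT])
qed


definition wf :: "('a::real_normed_vector \<Rightarrow> 'b::real_normed_vector) \<Rightarrow> real \<Rightarrow> real" where
  "wf f r = real_of_ereal (omega f r)"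

context
  fixes f :: "'a::real_normed_vector \<Rightarrow> 'b::real_normed_vector"
  assumes CM: "coarse_map f"
begin

lemma omega_upper: "norm (x - y) \<le> r \<Longrightarrow> ereal (norm (f x - f y)) \<le> omega f r"
  unfolding omega_def
  by (rule SUP_upper2[of "(x,y)"]) auto

lemma wf0: "0 \<le> r \<Longrightarrow> omega f r = ereal (wf f r) \<and> 0 \<le> wf f r"
proof -
  assume r: "0 \<le> r"
  have "ereal 0 \<le> omega f r" using omega_upper[of 0 0 r] r by simp
  moreover have "omega f r < \<infinity>" using CM r by (simp add: coarse_map_def)
  ultimately have "\<bar>omega f r\<bar> \<noteq> \<infinity>" by auto
  then have "ereal (real_of_ereal (omega f r)) = omega f r" by (rule ereal_real')
  moreover have "0 \<le> omega f r" using \<open>ereal 0 \<le> omega f r\<close> by (simp add: zero_ereal_def)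
  then have "0 \<le> real_of_ereal (omega f r)" by (rule real_of_ereal_pos)
  ultimately show ?thesis unfolding wf_def by simp
qed

lemma wf1: "norm (x - y) \<le> r \<Longrightarrow> norm (f x - f y) \<le> wf f r"
proof -
  assume a: "norm (x - y) \<le> r"
  then have "0 \<le> r" using norm_ge_zero order_trans by blast
  then show ?thesis using omega_upper[OF a] wf0 by fastforce
qed

lemma wf_mono: "0 \<le> r \<Longrightarrow> r \<le> r' \<Longrightarrow> wf f r \<le> wf f r'"
proof -
  assume r: "0 \<le> r" "r \<le> r'"
  have "omega f r \<le> omega f r'" unfolding omega_def
    by (rule SUP_subset_mono) (use r in auto)
  then show ?thesis using wf0[of r] wf0[of r'] r by auto
qed

lemma wf_approx: "0 \<le> r \<Longrightarrow> v < wf f r \<Longrightarrow> \<exists>x y. norm (x - y) \<le> r \<and> v < norm (f x - f y)"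
proof -
  assume r: "0 \<le> r" and v: "v < wf f r"
  then have "ereal v < omega f r" using wf0[OF r] by simp
  then obtain pr where "pr \<in> {(x,y). norm (x - y) \<le> r}" "ereal v < (case pr of (x,y) \<Rightarrow> ereal (norm (f x - f y)))"
    unfolding omega_def less_SUP_iff by blast
  then show ?thesis by (cases pr) auto
qed

lemma wf_linear: "0 \<le> r \<Longrightarrow> wf f r \<le> wf f 1 * (r + 1)"
proof -
  assume r: "0 \<le> r"
  have L0: "0 \<le> wf f 1" using wf0[of 1] by simp
  have ind: "\<forall>x y :: 'a. norm (x - y) \<le> real n \<longrightarrow> norm (f x - f y) \<le> real n * wf f 1" for n
  proof (induction n)
    case 0 then show ?case by simp
  next
    case (Suc n)
    show ?case
    proof (intro allI impI)
      fix x y :: 'a assume xy: "norm (x - y) \<le> real (Suc n)"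
      define z where "z = y + (real n / real (Suc n)) *\<^sub>R (x - y)"
      have "z - y = (real n / real (Suc n)) *\<^sub>R (x - y)" by (simp add: z_def)
      then have "norm (z - y) = (real n / real (Suc n)) * norm (x - y)" by simp
      also have "\<dots> \<le> (real n / real (Suc n)) * real (Suc n)" using xy by (intro mult_left_mono) auto
      also have "\<dots> = real n" by simp
      finally have 1: "norm (f z - f y) \<le> real n * wf f 1" using Suc by blast
      have "x - z = (x - y) - (real n / real (Suc n)) *\<^sub>R (x - y)" by (simp add: z_def)
      also have "\<dots> = (1 - real n / real (Suc n)) *\<^sub>R (x - y)" by (simp add: scaleR_diff_left)
      finally have xz: "x - z = (1 - real n / real (Suc n)) *\<^sub>R (x - y)" .
      have c: "1 - real n / real (Suc n) = 1 / real (Suc n)" by (simp add: field_simps)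
      have "norm (x - z) = (1 / real (Suc n)) * norm (x - y)" unfolding xz c by simp
      also have "\<dots> \<le> (1 / real (Suc n)) * real (Suc n)" using xy by (intro mult_left_mono) auto
      also have "\<dots> = 1" by simp
      finally have 2: "norm (f x - f z) \<le> wf f 1" by (rule wf1)
      have "norm (f x - f y) \<le> norm (f x - f z) + norm (f z - f y)"
        using norm_triangle_ineq[of "f x - f z" "f z - f y"] by simp
      also have "\<dots> \<le> real (Suc n) * wf f 1" using 1 2 by (simp add: algebra_simps)
      finally show "norm (f x - f y) \<le> real (Suc n) * wf f 1" .
    qed
  qed
  define n where "n = nat \<lceil>r\<rceil>"
  have n: "r \<le> real n" "real n \<le> r + 1" using r by (auto simp: n_def)
  have "omega f r \<le> ereal (wf f 1 * (r + 1))"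
    unfolding omega_def
  proof (rule SUP_least, clarify)
    fix x y :: 'a assume "norm (x - y) \<le> r"
    then have "norm (f x - f y) \<le> real n * wf f 1" using ind n by (meson order_trans)
    also have "\<dots> \<le> wf f 1 * (r + 1)" using mult_right_mono[OF n(2) L0] by (simp add: mult.commute)
    finally show "ereal (norm (f x - f y)) \<le> ereal (wf f 1 * (r + 1))" by simp
  qed
  then show ?thesis using wf0[OF r] by simp
qed

end

lemma lambda_exists:
  fixes w :: "real \<Rightarrow> real"
  assumes nn: "\<And>r. 0 \<le> r \<Longrightarrow> 0 \<le> w r" and lin: "\<And>r. 0 \<le> r \<Longrightarrow> w r \<le> L * (r + 1)"
  shows "\<exists>lam\<ge>0. (\<forall>\<epsilon>>0. \<exists>r0. \<forall>r\<ge>r0. w r \<le> (lam+\<epsilon>) * r) \<and> (\<forall>\<epsilon>>0. \<forall>R. \<exists>r\<ge>R. (lam-\<epsilon>) * r < w r)"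
proof -
  define S where "S = {\<Lambda>. \<exists>r0. \<forall>r\<ge>r0. w r \<le> \<Lambda> * r}"
  define L' where "L' = max L 0"
  have "2 * L' \<in> S" unfolding S_def
  proof (intro CollectI exI[of _ 1] allI impI)
    fix r :: real assume r: "1 \<le> r"
    have "w r \<le> L * (r + 1)" using lin r by simp
    also have "\<dots> \<le> L' * (r + 1)" using r by (intro mult_right_mono) (auto simp: L'_def)
    also have "\<dots> \<le> L' * (2 * r)" using r by (intro mult_left_mono) (auto simp: L'_def)
    finally show "w r \<le> 2 * L' * r" by simp
  qed
  then have Sne: "S \<noteq> {}" by blast
  have Sge: "0 \<le> \<Lambda>" if LS: "\<Lambda> \<in> S" for \<Lambda>
  proof (rule ccontr)
    assume "\<not> 0 \<le> \<Lambda>"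
    obtain r0 where r0: "\<forall>r\<ge>r0. w r \<le> \<Lambda> * r" using LS by (auto simp: S_def)
    define r where "r = max r0 1"
    have "w r \<le> \<Lambda> * r" using r0 by (simp add: r_def)
    moreover have "\<Lambda> * r < 0" using \<open>\<not> 0 \<le> \<Lambda>\<close> by (simp add: r_def mult_neg_pos)
    moreover have "0 \<le> w r" using nn by (simp add: r_def)
    ultimately show False by simp
  qed
  have bdd: "bdd_below S" using Sge by (auto simp: bdd_below_def)
  define lam where "lam = Inf S"
  have l0: "0 \<le> lam" unfolding lam_def using Sne Sge by (intro cInf_greatest) auto
  have P1: "\<exists>r0. \<forall>r\<ge>r0. w r \<le> (lam+\<epsilon>) * r" if e: "\<epsilon> > 0" for \<epsilon>
  proof -
    obtain \<Lambda> where \<Lambda>: "\<Lambda> \<in> S" "\<Lambda> < lam + \<epsilon>" using cInf_lessD[OF Sne, of "lam+\<epsilon>"] e by (auto simp: lam_def)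
    then obtain r0 where r0: "\<forall>r\<ge>r0. w r \<le> \<Lambda> * r" by (auto simp: S_def)
    show ?thesis
    proof (intro exI[of _ "max r0 0"] allI impI)
      fix r assume "max r0 0 \<le> r"
      then have "w r \<le> \<Lambda> * r" "0 \<le> r" using r0 by auto
      then show "w r \<le> (lam+\<epsilon>) * r" using \<Lambda> by (meson less_imp_le mult_right_mono order_trans)
    qed
  qed
  have P2: "\<exists>r\<ge>R. (lam-\<epsilon>) * r < w r" if e: "\<epsilon> > 0" for \<epsilon> R
  proof (rule ccontr)
    assume "\<not> ?thesis"
    then have "\<forall>r\<ge>R. w r \<le> (lam-\<epsilon>) * r" by (meson not_le)
    then have "lam - \<epsilon> \<in> S" by (auto simp: S_def)
    then have "lam \<le> lam - \<epsilon>" unfolding lam_def using bdd by (rule cInf_lower)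
    then show False using e by simp
  qed
  show ?thesis using l0 P1 P2 by blast
qed

context
  fixes e :: "nat \<Rightarrow> 'b::real_normed_vector" and q :: real
  assumes SB: "schauder_basis e" and LQ: "lower_lq_estimate e q" and q: "q \<ge> 1"
begin

lemma midpoint_tail:
  assumes \<epsilon>: "0 \<le> \<epsilon>" "\<epsilon> \<le> 1" and A: "0 \<le> A"
    and ty: "norm (yv - PN e N yv) \<le> \<epsilon> * norm yv"
    and zp: "norm (zz + yv) \<le> A * norm yv" and zm: "norm (zz - yv) \<le> A * norm yv"
    and T0: "\<epsilon> * norm yv \<le> T0"
    and key: "(A powr q - (1-\<epsilon>) powr q) * norm yv powr q < (T0 - \<epsilon> * norm yv) powr q"
  shows "norm (zz - PN e N zz) \<le> T0"
proof (rule ccontr)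
  assume "\<not> ?thesis"
  then have T: "T0 < norm (zz - PN e N zz)" by simp
  let ?n = "norm yv"
  have core: False if u: "norm u \<le> A * ?n" "(1-\<epsilon>) * ?n \<le> norm (PN e N u)" "T0 - \<epsilon> * ?n < norm (u - PN e N u)" for u
  proof -
    have q0: "0 < q" using q by simp
    have "((1-\<epsilon>) * ?n) powr q \<le> norm (PN e N u) powr q"
      using u(2) \<epsilon> q0 by (intro powr_mono2) auto
    moreover have "(T0 - \<epsilon> * ?n) powr q < norm (u - PN e N u) powr q"
      using u(3) T0 q0 by (intro powr_less_mono2) auto
    moreover have "norm (PN e N u) powr q + norm (u - PN e N u) powr q \<le> norm u powr q"
      by (rule decomp[OF SB LQ q])
    moreover have "norm u powr q \<le> (A * ?n) powr q" using u(1) q0 by (intro powr_mono2) auto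
    ultimately have "((1-\<epsilon>) * ?n) powr q + (T0 - \<epsilon> * ?n) powr q < (A * ?n) powr q" by linarith
    moreover have "((1-\<epsilon>) * ?n) powr q = (1-\<epsilon>) powr q * ?n powr q" using \<epsilon> by (simp add: powr_mult)
    moreover have "(A * ?n) powr q = A powr q * ?n powr q" using A by (simp add: powr_mult)
    ultimately show False using key by (simp add: algebra_simps)
  qed
  have tails: "T0 - \<epsilon> * ?n < norm ((zz + s *\<^sub>R yv) - PN e N (zz + s *\<^sub>R yv))" if s: "\<bar>s\<bar> = 1" for s
  proof -
    have eq: "(zz + s *\<^sub>R yv) - PN e N (zz + s *\<^sub>R yv) = (zz - PN e N zz) + s *\<^sub>R (yv - PN e N yv)"
    proof -
      have "PN e N (s *\<^sub>R yv) = s *\<^sub>R PN e N yv" by (rule PN_scale[OF SB])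
      then show ?thesis by (simp add: PN_add[OF SB] algebra_simps)
    qed
    have "norm ((zz + s *\<^sub>R yv) - PN e N (zz + s *\<^sub>R yv)) \<ge> norm (zz - PN e N zz) - norm (s *\<^sub>R (yv - PN e N yv))"
      unfolding eq by (rule norm_diff_ineq)
    moreover have "norm (s *\<^sub>R (yv - PN e N yv)) \<le> \<epsilon> * ?n" using s ty by simp
    ultimately show ?thesis using T by linarith
  qed
  have eq2: "2 *\<^sub>R PN e N yv = PN e N (zz + yv) - PN e N (zz - yv)"
    by (simp add: PN_add[OF SB] PN_diff[OF SB] scaleR_2)
  have "norm (2 *\<^sub>R PN e N yv) \<le> norm (PN e N (zz + yv)) + norm (PN e N (zz - yv))"
    unfolding eq2 by (rule norm_triangle_ineq4)
  then have "2 * norm (PN e N yv) \<le> norm (PN e N (zz + yv)) + norm (PN e N (zz - yv))" by simp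
  moreover have "(1-\<epsilon>) * ?n \<le> norm (PN e N yv)"
    using ty norm_triangle_ineq2[of yv "PN e N yv"] by (simp add: algebra_simps)
  ultimately have "(1-\<epsilon>) * ?n \<le> norm (PN e N (zz + yv)) \<or> (1-\<epsilon>) * ?n \<le> norm (PN e N (zz - yv))"
    by linarith
  then show False
  proof
    assume h: "(1-\<epsilon>) * ?n \<le> norm (PN e N (zz + yv))"
    have "T0 - \<epsilon> * ?n < norm ((zz + yv) - PN e N (zz + yv))" using tails[of 1] by simp
    then show False by (rule core[OF zp h])
  next
    assume h: "(1-\<epsilon>) * ?n \<le> norm (PN e N (zz - yv))"
    have "T0 - \<epsilon> * ?n < norm ((zz - yv) - PN e N (zz - yv))" using tails[of "-1"] by simp
    then show False by (rule core[OF zm h])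
  qed
qed

end


lemma theta_exists:
  fixes lam \<delta> C q p :: real
  assumes lam: "lam > 0" and \<delta>: "0 < \<delta>" "\<delta> < 1" and C: "C \<ge> 0" and q: "1 \<le> q" "q < p"
  shows "\<exists>\<theta>. 0 < \<theta> \<and> \<theta> < 1 \<and> ((1 + C * \<theta> powr p) powr q - 1) * lam powr q < (\<delta> * \<theta>) powr q"
proof -
  define G where "G = (2 powr q - 1) * C * lam powr q + C + 1"
  have two: "1 \<le> 2 powr q - 1"
  proof -
    have "2 powr 1 \<le> (2::real) powr q" using q by (intro powr_mono) auto
    then show ?thesis by simp
  qed
  have "0 \<le> (2 powr q - 1) * C * lam powr q" using two C by simp
  then have G1: "(2 powr q - 1) * C * lam powr q \<le> G" "C \<le> G" "0 < G"
    using C by (auto simp: G_def)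
  define \<kappa> where "\<kappa> = \<delta> powr q / G"
  have \<kappa>: "0 < \<kappa>" using \<delta> G1 by (simp add: \<kappa>_def)
  define \<theta> where "\<theta> = min (1/2) ((\<kappa> powr (1/(p-q))) / 2)"
  have \<theta>: "0 < \<theta>" "\<theta> < 1" using \<kappa> by (auto simp: \<theta>_def)
  have "0 < \<kappa> powr (1/(p-q))" using \<kappa> by simp
  moreover have "\<theta> \<le> \<kappa> powr (1/(p-q)) / 2" by (simp add: \<theta>_def)
  ultimately have "\<theta> < \<kappa> powr (1/(p-q))" by linarith
  then have "\<theta> powr (p-q) < (\<kappa> powr (1/(p-q))) powr (p-q)" using \<theta> q by (intro powr_less_mono2) auto
  also have "\<dots> = \<kappa>" using q \<kappa> by (simp add: powr_powr)
  finally have tpq: "\<theta> powr (p-q) < \<kappa>" .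
  have split: "\<theta> powr p = \<theta> powr (p-q) * \<theta> powr q" by (simp add: powr_add[symmetric])
  have tq: "0 < \<theta> powr q" "\<theta> powr q \<le> 1" using \<theta> q by (auto intro: powr_le1)
  have dq: "\<delta> powr q \<le> 1" using \<delta> q by (auto intro: powr_le1)
  define u where "u = C * \<theta> powr p"
  have u0: "0 \<le> u" using C by (simp add: u_def)
  have "u \<le> C * \<kappa>"
  proof -
    have "\<theta> powr p \<le> \<theta> powr (p-q)" using split tq by (simp add: mult_left_le)
    then have "\<theta> powr p \<le> \<kappa>" using tpq by simp
    then show ?thesis unfolding u_def using C by (simp add: mult_left_mono)
  qed
  also have "C * \<kappa> \<le> 1"
  proof -
    have "C * \<kappa> = C * \<delta> powr q / G" by (simp add: \<kappa>_def)
    also have "\<dots> \<le> G * 1 / G" using G1 dq C by (intro divide_right_mono mult_mono) auto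
    finally show ?thesis using G1 by simp
  qed
  finally have u1: "u \<le> 1" .
  have conv: "(1 + u) powr q \<le> 1 + (2 powr q - 1) * u"
  proof -
    have "(\<lambda>x::real. x powr q) ((1 - u) *\<^sub>R 1 + u *\<^sub>R 2) \<le> (1 - u) * 1 powr q + u * 2 powr q"
      using convex_onD[OF powr_convex[OF q(1)], of u 1 2] u0 u1 by simp
    then show ?thesis by (simp add: algebra_simps)
  qed
  have "((1 + u) powr q - 1) * lam powr q \<le> (2 powr q - 1) * u * lam powr q"
    using conv lam by (intro mult_right_mono) auto
  also have "\<dots> = ((2 powr q - 1) * C * lam powr q) * \<theta> powr (p-q) * \<theta> powr q"
    by (simp add: u_def split)
  also have "\<dots> \<le> G * \<theta> powr (p-q) * \<theta> powr q"
    using G1 tq by (intro mult_right_mono) auto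
  also have "\<dots> < \<delta> powr q * \<theta> powr q"
  proof -
    have "G * \<theta> powr (p-q) < G * \<kappa>" using tpq G1 by simp
    also have "G * \<kappa> = \<delta> powr q" using G1 by (simp add: \<kappa>_def)
    finally show ?thesis using tq by simp
  qed
  also have "\<dots> = (\<delta> * \<theta>) powr q" using \<delta> \<theta> by (simp add: powr_mult)
  finally show ?thesis using \<theta> unfolding u_def by blast
qed

lemma eps_exists:
  fixes lam \<delta> C q p \<theta> :: real
  assumes lam: "lam > 0" and \<delta>: "0 < \<delta>" and C: "C \<ge> 0" and q: "1 \<le> q" and \<theta>: "0 < \<theta>"
    and key: "((1 + C * \<theta> powr p) powr q - 1) * lam powr q < (\<delta> * \<theta>) powr q"
  shows "\<exists>\<epsilon>. 0 < \<epsilon> \<and> \<epsilon> < lam \<and> \<epsilon> < 1 \<and> 0 < \<delta>*\<theta> - \<epsilon>*(lam+\<epsilon>) \<and>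
     (((lam+\<epsilon>)*(1 + C * \<theta> powr p + \<epsilon>)/(lam-\<epsilon>)) powr q - (1-\<epsilon>) powr q) * (lam+\<epsilon>) powr q
       < (\<delta>*\<theta> - \<epsilon>*(lam+\<epsilon>)) powr q"
proof -
  define K where "K = C * \<theta> powr p"
  have K0: "0 \<le> K" using C by (simp add: K_def)
  let ?h = "\<lambda>\<epsilon>. (((lam+\<epsilon>)*(1 + K + \<epsilon>)/(lam-\<epsilon>)) powr q - (1-\<epsilon>) powr q) * (lam+\<epsilon>) powr q"
  let ?g = "\<lambda>\<epsilon>::real. \<delta>*\<theta> - \<epsilon>*(lam+\<epsilon>)"
  have lh: "(?h \<longlongrightarrow> ((1 + K) powr q - 1) * lam powr q) (at_right 0)"
    by (rule tendsto_eq_intros refl | use lam K0 in simp)+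
  have lg: "(?g \<longlongrightarrow> \<delta>*\<theta>) (at_right 0)"
    by (rule tendsto_eq_intros refl | simp)+
  have lr: "((\<lambda>\<epsilon>. ?g \<epsilon> powr q) \<longlongrightarrow> (\<delta>*\<theta>) powr q) (at_right 0)"
    using lg \<delta> \<theta> by (intro tendsto_intros) auto
  have "((\<lambda>\<epsilon>. ?g \<epsilon> powr q - ?h \<epsilon>) \<longlongrightarrow> (\<delta>*\<theta>) powr q - ((1 + K) powr q - 1) * lam powr q) (at_right 0)"
    by (intro tendsto_diff lr lh)
  then have ev1: "eventually (\<lambda>\<epsilon>. 0 < ?g \<epsilon> powr q - ?h \<epsilon>) (at_right 0)"
    by (rule order_tendstoD(1)) (use key in \<open>simp add: K_def\<close>)
  have ev2: "eventually (\<lambda>\<epsilon>. 0 < ?g \<epsilon>) (at_right 0)"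
    by (rule order_tendstoD(1)[OF lg]) (use \<delta> \<theta> in simp)
  have ev3: "eventually (\<lambda>\<epsilon>. 0 < \<epsilon> \<and> \<epsilon> < min lam 1) (at_right (0::real))"
    unfolding eventually_at_right_field using lam by (intro exI[of _ "min lam 1"]) auto
  have "eventually (\<lambda>\<epsilon>. (0 < ?g \<epsilon> powr q - ?h \<epsilon>) \<and> 0 < ?g \<epsilon> \<and> (0 < \<epsilon> \<and> \<epsilon> < min lam 1)) (at_right 0)"
    by (rule eventually_conj[OF ev1 eventually_conj[OF ev2 ev3]])
  then obtain b where b: "b > 0" "\<forall>y>0. y < b \<longrightarrow> (0 < ?g y powr q - ?h y) \<and> 0 < ?g y \<and> (0 < y \<and> y < min lam 1)"
    unfolding eventually_at_right_field by auto
  have bb: "b/2 > 0" "b/2 < b" using b by auto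
  have H: "(0 < ?g (b/2) powr q - ?h (b/2)) \<and> 0 < ?g (b/2) \<and> (0 < b/2 \<and> b/2 < min lam 1)"
    using b(2) bb by blast
  show ?thesis by (intro exI[of _ "b/2"]) (use H in \<open>simp add: K_def\<close>)
qed


lemma half_half: "(1/2) *\<^sub>R x + (1/2) *\<^sub>R x = (x::'c::real_vector)"
proof -
  have "(1/2) *\<^sub>R x + (1/2) *\<^sub>R x = ((1/2) + (1/2::real)) *\<^sub>R x" by (rule scaleR_add_left[symmetric])
  then show ?thesis by simp
qed

lemma half_half': "a + (1/2) *\<^sub>R x + (1/2) *\<^sub>R x = a + (x::'c::real_vector)"
  using half_half[of x] by (simp add: add.assoc)

theorem lemma5p4:
  fixes f :: "'a::banach \<Rightarrow> 'b::banach" and e :: "nat \<Rightarrow> 'b" and p q :: real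
  assumes "1 \<le> q" and "q < p"
    and "asympt_p_unif_smooth TYPE('a) p"
    and "one_unconditional_basis e" and "lower_lq_estimate e q"
    and "coarse_map f"
  shows "\<forall>t>0. \<forall>\<delta>\<in>{0<..<1}. \<exists>x \<tau> K. \<tau> > t \<and> compact K \<and>
           (\<forall>xs. weakly_null xs \<and> (\<forall>n. norm (xs n) \<le> 1) \<longrightarrow>
              (\<exists>n0::nat. \<forall>n>n0. f (x + \<tau> *\<^sub>R xs n) \<in> ball_nbhd K (\<delta> * \<tau>)))"
proof (intro allI impI ballI)
  fix t \<delta> :: real assume t: "t > 0" and \<delta>: "\<delta> \<in> {0<..<1}"
  have q: "1 \<le> q" "q < p" using assms(1,2) by auto
  have SB: "schauder_basis e" using assms(4) by (simp add: one_unconditional_basis_def)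
  have LQ: "lower_lq_estimate e q" by (rule assms(5))
  have CM: "coarse_map f" by (rule assms(6))
  obtain C0 where C0: "\<forall>s\<in>{0..1}. rho_bar TYPE('a) s \<le> ereal (C0 * s powr p)"
    using assms(3) by (auto simp: asympt_p_unif_smooth_def)
  define C where "C = max C0 0"
  have C: "C \<ge> 0" by (simp add: C_def)
  have AUS: "\<forall>s\<in>{0..1}. rho_bar TYPE('a) s \<le> ereal (C * s powr p)"
  proof
    fix s :: real assume s: "s \<in> {0..1}"
    have "C0 * s powr p \<le> C * s powr p" by (intro mult_right_mono) (auto simp: C_def)
    then show "rho_bar TYPE('a) s \<le> ereal (C * s powr p)" using C0 s order_trans ereal_less_eq(3) by blast
  qed
  obtain lam where lam0: "lam \<ge> 0"
    and LP1: "\<forall>\<epsilon>>0. \<exists>r0. \<forall>r\<ge>r0. wf f r \<le> (lam+\<epsilon>) * r"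
    and LP2: "\<forall>\<epsilon>>0. \<forall>R. \<exists>r\<ge>R. (lam-\<epsilon>) * r < wf f r"
    using lambda_exists[of "wf f" "wf f 1"] wf0[OF CM] wf_linear[OF CM] by blast
  have \<delta>0: "0 < \<delta>" "\<delta> < 1" using \<delta> by auto
  show "\<exists>x \<tau> K. \<tau> > t \<and> compact K \<and>
           (\<forall>xs. weakly_null xs \<and> (\<forall>n. norm (xs n) \<le> 1) \<longrightarrow>
              (\<exists>n0::nat. \<forall>n>n0. f (x + \<tau> *\<^sub>R xs n) \<in> ball_nbhd K (\<delta> * \<tau>)))"
  proof (cases "lam = 0")
    case True
    obtain r0 where r0: "\<forall>r\<ge>r0. wf f r \<le> (lam + \<delta>/2) * r" using LP1 \<delta>0 by (meson half_gt_zero)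
    define \<tau> where "\<tau> = max t r0 + 1"
    have \<tau>: "\<tau> > t" "\<tau> \<ge> r0" "\<tau> > 0" using t by (auto simp: \<tau>_def)
    show ?thesis
    proof (rule exI[of _ 0], rule exI[of _ \<tau>], rule exI[of _ "{f 0}"], intro conjI allI impI)
      show "t < \<tau>" using \<tau> by simp
      show "compact {f 0}" by simp
      fix xs :: "nat \<Rightarrow> 'a" assume xs: "weakly_null xs \<and> (\<forall>n. norm (xs n) \<le> 1)"
      show "\<exists>n0::nat. \<forall>n>n0. f (0 + \<tau> *\<^sub>R xs n) \<in> ball_nbhd {f 0} (\<delta> * \<tau>)"
      proof (intro exI[of _ 0] allI impI)
        fix n :: nat
        have "norm (\<tau> *\<^sub>R xs n - 0) \<le> \<tau>" using xs \<tau> by (simp add: mult_left_le)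
        then have "norm (f (\<tau> *\<^sub>R xs n) - f 0) \<le> wf f \<tau>" by (rule wf1[OF CM])
        also have "\<dots> \<le> (lam + \<delta>/2) * \<tau>" using r0 \<tau> by simp
        also have "\<dots> \<le> \<delta> * \<tau>" using True \<tau> \<delta>0 by simp
        finally have "norm (f (\<tau> *\<^sub>R xs n) - f 0) \<le> \<delta> * \<tau>" .
        then show "f (0 + \<tau> *\<^sub>R xs n) \<in> ball_nbhd {f 0} (\<delta> * \<tau>)"
          unfolding ball_nbhd_def by (intro CollectI exI[of _ "f 0"] exI[of _ "f (\<tau> *\<^sub>R xs n) - f 0"]) simp
      qed
    qed
  next
    case False
    then have lam: "lam > 0" using lam0 by simp
    obtain \<theta> where \<theta>: "0 < \<theta>" "\<theta> < 1"
      and th: "((1 + C * \<theta> powr p) powr q - 1) * lam powr q < (\<delta> * \<theta>) powr q"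
      using theta_exists[OF lam \<delta>0 C q] by blast
    obtain \<epsilon> where \<epsilon>: "0 < \<epsilon>" "\<epsilon> < lam" "\<epsilon> < 1" "0 < \<delta>*\<theta> - \<epsilon>*(lam+\<epsilon>)"
      and ek: "(((lam+\<epsilon>)*(1 + C * \<theta> powr p + \<epsilon>)/(lam-\<epsilon>)) powr q - (1-\<epsilon>) powr q) * (lam+\<epsilon>) powr q
       < (\<delta>*\<theta> - \<epsilon>*(lam+\<epsilon>)) powr q"
      using eps_exists[OF lam \<delta>0(1) C q(1) \<theta>(1) th] by blast
    obtain r0 where r0: "\<forall>r\<ge>r0. wf f r \<le> (lam+\<epsilon>) * r" using LP1 \<epsilon> by blast
    define r0' where "r0' = max r0 0"
    define D0 where "D0 = max r0' (t/\<theta>) + 1"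
    define L' where "L' = wf f 1 + 1"
    have L': "L' > 0" "wf f 1 \<le> L'" using wf0[OF CM, of 1] by (auto simp: L'_def)
    define Rb where "Rb = (2*D0 + 1) * L' / (lam - \<epsilon>) + 1"
    obtain s where s: "s \<ge> max Rb 0" "(lam-\<epsilon>) * s < wf f s" using LP2 \<epsilon> by blast
    obtain a b where ab: "norm (a - b) \<le> s" "(lam-\<epsilon>) * s < norm (f a - f b)"
      using wf_approx[OF CM _ s(2)] s(1) by auto
    define d where "d = norm (a - b) / 2"
    have nab: "norm (a - b) = 2 * d" by (simp add: d_def)
    have fab_w: "norm (f a - f b) \<le> wf f (2*d)" using wf1[OF CM] nab by simp
    have "wf f (2*d) \<le> wf f 1 * (2*d + 1)" using wf_linear[OF CM, of "2*d"] by (simp add: d_def)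
    also have "\<dots> \<le> L' * (2*d + 1)" using L' by (intro mult_right_mono) (auto simp: d_def)
    finally have fab_L: "norm (f a - f b) \<le> L' * (2*d + 1)" using fab_w by simp
    have "(lam - \<epsilon>) * Rb = (2*D0 + 1) * L' + (lam - \<epsilon>)" using \<epsilon> by (simp add: Rb_def field_simps)
    moreover have "(lam - \<epsilon>) * Rb \<le> (lam - \<epsilon>) * s" using s \<epsilon> by (intro mult_left_mono) auto
    ultimately have "(2*D0 + 1) * L' < L' * (2*d + 1)" using ab fab_L \<epsilon> by linarith
    then have "2*D0 + 1 < 2*d + 1" using L' by (simp add: mult.commute)
    then have dD0: "D0 < d" by simp
    have d: "d > r0'" "d > t/\<theta>" "d > 0" "2*d \<ge> r0" using dD0 by (auto simp: D0_def r0'_def)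
    define \<tau> where "\<tau> = \<theta> * d"
    have \<tau>t: "\<tau> > t" using d(2) \<theta> by (simp add: \<tau>_def field_simps)
    define yv where "yv = (1/2) *\<^sub>R (f b - f a)"
    define c where "c = (1/2) *\<^sub>R (f a + f b)"
    define m where "m = (1/2) *\<^sub>R (a + b)"
    have nyv: "norm yv = norm (f a - f b) / 2" by (simp add: yv_def norm_minus_commute)
    have ny_lo: "(lam-\<epsilon>) * d \<le> norm yv"
    proof -
      have "(lam-\<epsilon>) * (2*d) \<le> (lam-\<epsilon>) * s" using ab(1) nab \<epsilon> by (intro mult_left_mono) auto
      then show ?thesis using ab(2) nyv by simp
    qed
    have ny_hi: "norm yv \<le> (lam+\<epsilon>) * d"
    proof -
      have "wf f (2*d) \<le> (lam+\<epsilon>) * (2*d)" using r0 d by simp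
      then show ?thesis using fab_w nyv by simp
    qed
    have ny_pos: "norm yv > 0" using ny_lo \<epsilon> d by (smt (verit) mult_pos_pos)
    obtain N where N: "norm (yv - PN e N yv) < \<epsilon> * norm yv"
      using tail_small[OF SB, of "\<epsilon> * norm yv" yv] \<epsilon> ny_pos by auto
    define Kc where "Kc = C * \<theta> powr p"
    have Kc: "0 \<le> Kc" using C by (simp add: Kc_def)
    define A where "A = (lam+\<epsilon>)*(1 + Kc + \<epsilon>)/(lam-\<epsilon>)"
    have A1: "1 \<le> A"
    proof -
      have "(lam - \<epsilon>) * 1 \<le> (lam+\<epsilon>)*(1 + Kc + \<epsilon>)" using \<epsilon> Kc by (intro mult_mono) auto
      then show ?thesis using \<epsilon> by (simp add: A_def field_simps)
    qed
    have A_eq: "(lam+\<epsilon>) * (d * (1 + Kc + \<epsilon>)) = A * ((lam-\<epsilon>) * d)" using \<epsilon> by (simp add: A_def field_simps)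
    define R where "R = A * norm yv"
    define rr where "rr i = 2 * R / norm (e i)" for i
    define SN where "SN = {\<Sum>i<N. a i *\<^sub>R e i | a. \<forall>i<N. \<bar>a i\<bar> \<le> rr i}"
    define K where "K = (\<lambda>v. c + v) ` SN"
    have cK: "compact K" unfolding K_def SN_def
      by (rule compact_continuous_image[OF _ compact_SN]) (auto intro!: continuous_intros)
    show ?thesis
    proof (intro exI[of _ m] exI[of _ \<tau>] exI[of _ K] conjI allI impI)
      show "t < \<tau>" by (rule \<tau>t)
      show "compact K" by (rule cK)
      fix xs :: "nat \<Rightarrow> 'a" assume xs: "weakly_null xs \<and> (\<forall>n. norm (xs n) \<le> 1)"
      define z1 where "z1 = (1/2) *\<^sub>R (b - a)"
      define z2 where "z2 = (1/2) *\<^sub>R (a - b)"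
      have nz: "norm z1 = d" "norm z2 = d" by (auto simp: z1_def z2_def d_def norm_minus_commute)
      have ev1: "eventually (\<lambda>n. norm (z1 + (\<theta>*d) *\<^sub>R xs n) \<le> d * (1 + C * \<theta> powr p + \<epsilon>)) sequentially"
        by (rule aus_step[OF AUS C nz(1) d(3)]) (use \<theta> \<epsilon> xs in auto)
      have ev2: "eventually (\<lambda>n. norm (z2 + (\<theta>*d) *\<^sub>R xs n) \<le> d * (1 + C * \<theta> powr p + \<epsilon>)) sequentially"
        by (rule aus_step[OF AUS C nz(2) d(3)]) (use \<theta> \<epsilon> xs in auto)
      obtain n0 where n0: "\<forall>n\<ge>n0. norm (z1 + (\<theta>*d) *\<^sub>R xs n) \<le> d * (1 + C * \<theta> powr p + \<epsilon>) \<and>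
          norm (z2 + (\<theta>*d) *\<^sub>R xs n) \<le> d * (1 + C * \<theta> powr p + \<epsilon>)"
        using eventually_conj[OF ev1 ev2] unfolding eventually_sequentially by blast
      show "\<exists>n0::nat. \<forall>n>n0. f (m + \<tau> *\<^sub>R xs n) \<in> ball_nbhd K (\<delta> * \<tau>)"
      proof (intro exI[of _ n0] allI impI)
        fix n assume "n0 < n"
        then have nb: "norm (z1 + (\<theta>*d) *\<^sub>R xs n) \<le> d * (1 + Kc + \<epsilon>)"
             "norm (z2 + (\<theta>*d) *\<^sub>R xs n) \<le> d * (1 + Kc + \<epsilon>)" using n0 by (auto simp: Kc_def)
        define m' where "m' = m + \<tau> *\<^sub>R xs n"
        have ma: "m' - a = z1 + (\<theta>*d) *\<^sub>R xs n" by (simp add: m'_def m_def z1_def \<tau>_def algebra_simps half_half half_half')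
        have mb: "m' - b = z2 + (\<theta>*d) *\<^sub>R xs n" by (simp add: m'_def m_def z2_def \<tau>_def algebra_simps half_half half_half')
        have dge: "d * (1 + Kc + \<epsilon>) \<ge> r0"
        proof -
          have h1: "0 \<le> d * (Kc + \<epsilon>)" using d Kc \<epsilon> by simp
          have h2: "d * (1 + Kc + \<epsilon>) = d + d * (Kc + \<epsilon>)" by (simp add: algebra_simps)
          have h3: "r0 \<le> d" using d by (simp add: r0'_def)
          show ?thesis using h1 h2 h3 by linarith
        qed
        have bnd: "norm (f m' - f x) \<le> A * norm yv" if "norm (m' - x) \<le> d * (1 + Kc + \<epsilon>)" for x
        proof -
          have "norm (f m' - f x) \<le> wf f (d * (1 + Kc + \<epsilon>))" using wf1[OF CM that] .
          also have "\<dots> \<le> (lam+\<epsilon>) * (d * (1 + Kc + \<epsilon>))" using r0 dge by simp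
          also have "\<dots> = A * ((lam-\<epsilon>) * d)" by (rule A_eq)
          also have "\<dots> \<le> A * norm yv" using A1 ny_lo by (intro mult_left_mono) auto
          finally show ?thesis .
        qed
        define zz where "zz = f m' - c"
        have zp: "norm (zz + yv) \<le> A * norm yv"
        proof -
          have "zz + yv = f m' - f a" by (simp add: zz_def c_def yv_def algebra_simps half_half half_half')
          then show ?thesis using bnd[of a] ma nb by simp
        qed
        have zm: "norm (zz - yv) \<le> A * norm yv"
        proof -
          have "zz - yv = f m' - f b" by (simp add: zz_def c_def yv_def algebra_simps half_half half_half')
          then show ?thesis using bnd[of b] mb nb by simp
        qed
        have T0: "\<epsilon> * norm yv \<le> \<delta> * \<tau>"
        proof -
          have "\<epsilon> * norm yv \<le> \<epsilon> * ((lam+\<epsilon>) * d)" using ny_hi \<epsilon> by (intro mult_left_mono) auto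
          also have "\<dots> \<le> \<delta> * \<theta> * d"
          proof -
            have "(\<epsilon>*(lam+\<epsilon>)) * d \<le> (\<delta>*\<theta>) * d" using \<epsilon>(4) d by (intro mult_right_mono) auto
            then show ?thesis by (simp add: algebra_simps)
          qed
          finally show ?thesis by (simp add: \<tau>_def algebra_simps)
        qed
        have key: "(A powr q - (1-\<epsilon>) powr q) * norm yv powr q < (\<delta> * \<tau> - \<epsilon> * norm yv) powr q"
        proof -
          have X0: "0 \<le> A powr q - (1-\<epsilon>) powr q"
          proof -
            have "(1-\<epsilon>) powr q \<le> A powr q" using A1 \<epsilon> q by (intro powr_mono2) auto
            then show ?thesis by simp
          qed
          have "norm yv powr q \<le> ((lam+\<epsilon>) * d) powr q" using ny_hi q by (intro powr_mono2) auto
          also have "\<dots> = (lam+\<epsilon>) powr q * d powr q" using \<epsilon> d by (simp add: powr_mult)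
          finally have "(A powr q - (1-\<epsilon>) powr q) * norm yv powr q \<le>
              ((A powr q - (1-\<epsilon>) powr q) * (lam+\<epsilon>) powr q) * d powr q"
            using X0 by (simp add: mult_left_mono mult.assoc)
          also have "\<dots> < (\<delta>*\<theta> - \<epsilon>*(lam+\<epsilon>)) powr q * d powr q"
            using ek d by (intro mult_strict_right_mono) (auto simp: A_def Kc_def)
          also have "\<dots> = ((\<delta>*\<theta> - \<epsilon>*(lam+\<epsilon>)) * d) powr q" using \<epsilon> d by (simp add: powr_mult)
          also have "\<dots> \<le> (\<delta> * \<tau> - \<epsilon> * norm yv) powr q"
          proof (rule powr_mono2)
            show "0 \<le> q" using q by simp
            show "0 \<le> (\<delta>*\<theta> - \<epsilon>*(lam+\<epsilon>)) * d" using \<epsilon> d by simp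
            have "\<epsilon> * norm yv \<le> \<epsilon> * ((lam+\<epsilon>) * d)" using ny_hi \<epsilon> by (intro mult_left_mono) auto
            then show "(\<delta>*\<theta> - \<epsilon>*(lam+\<epsilon>)) * d \<le> \<delta> * \<tau> - \<epsilon> * norm yv"
              by (simp add: \<tau>_def algebra_simps)
          qed
          finally show ?thesis .
        qed
        have tailz: "norm (zz - PN e N zz) \<le> \<delta> * \<tau>"
          by (rule midpoint_tail[OF SB LQ q(1) _ _ _ _ zp zm T0 key]) (use \<epsilon> A1 N in auto)
        have nzz: "norm zz \<le> R"
        proof -
          have "zz = (1/2) *\<^sub>R ((zz + yv) + (zz - yv))" by (simp add: algebra_simps half_half)
          then have "norm zz = (1/2) * norm ((zz + yv) + (zz - yv))" by (metis norm_scaleR abs_of_pos half_gt_zero zero_less_one)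
          also have "\<dots> \<le> (1/2) * (norm (zz + yv) + norm (zz - yv))"
            using norm_triangle_ineq[of "zz + yv" "zz - yv"] by (intro mult_left_mono) auto
          also have "\<dots> \<le> R" using zp zm by (simp add: R_def)
          finally show ?thesis .
        qed
        have PNK: "PN e N zz \<in> SN"
          unfolding SN_def PN_def
        proof (intro CollectI exI[of _ "coord e zz"] conjI allI impI refl)
          fix i assume "i < N"
          have "\<bar>coord e zz i\<bar> * norm (e i) \<le> 2 * R"
            using coord_bound[OF SB LQ q(1), of zz i] nzz by simp
          then show "\<bar>coord e zz i\<bar> \<le> rr i"
            using e_nonzero[OF SB, of i] by (simp add: rr_def field_simps)
        qed
        have "f m' = (c + PN e N zz) + (zz - PN e N zz)" by (simp add: zz_def)
        moreover have "c + PN e N zz \<in> K" using PNK by (simp add: K_def)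
        ultimately show "f (m + \<tau> *\<^sub>R xs n) \<in> ball_nbhd K (\<delta> * \<tau>)"
          unfolding ball_nbhd_def m'_def using tailz by blast
      qed
    qed
  qed
qed


end
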